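(* Let $V$ be a finite set of truth values and $\models_{\mathcal{D}_p,\mathcal{D}_c}$ a mixed consequence truth-relation on $V$, with a constant expressive semantics. Then it admits a G-conditional, and for every classical connective $C$ it admits a regular connective sharing a regularity rule with $C$.
   Context: $V$ contains distinct $1,0$; sets of designated values $\mathcal{D}$ satisfy $1\in\mathcal{D}$, $0\notin\mathcal{D}$; $\gamma\models_{\mathcal{D}_p,\mathcal{D}_c}\delta$ iff ($\gamma\subseteq\mathcal{D}_p\Rightarrow\delta\cap\mathcal{D}_c\neq\emptyset$). Semantics: valuations mapping atoms to $V$, each connective interpreted by a fixed truth function, extended compositionally, every assignment to finitely many distinct atoms realized; constant expressive: every value is the constant value of some formula. $\Gamma\vdash\Delta$ iff $v(\Gamma)\models v(\Delta)$ for all $v$; $\Gamma,A=\Gamma\cup\{A\}$. An $n$-ary connective $C$ is regular with rule $(\mathcal{B}^p,\mathcal{B}^c)$ ($\mathcal{B}^p,\mathcal{B}^c\subseteq\mathcal{P}(\{1..n\})^2$) if for all $\Gamma,\Delta,F_1..F_n$: $\Gamma,C(\vec F)\vdash\Delta$ iff for all $(B_p,B_c)\in\mathcal{B}^p$, $\Gamma\cup\{F_i:i\in B_p\}\vdash\{F_i:i\in B_c\}\cup\Delta$; $\Gamma\vdash C(\vec F),\Delta$ iff the same for all $(B_p,B_c)\in\mathcal{B}^c$. A classical connective is a truth function $\{0,1\}^n\to\{0,1\}$, regular in classical logic ($V=\{0,1\}$, relation $\models_{\{1\},\{1\}}$); two connectives share a regularity rule if some $(\mathcal{B}^p,\mathcal{B}^c)$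 is satisfied by both in their respective logics. "Admits" a connective: some truth function on $V$ interprets a connective with the property. A G-conditional satisfies $\Gamma\vdash A\to B,\Delta$ iff $\Gamma,A\vdash B,\Delta$, and $\Gamma,A\to B\vdash\Delta$ iff ($\Gamma\vdash A,\Delta$ and $\Gamma,B\vdash\Delta$). *)

theory Defs
  imports Main
begin

datatype 'c fm = Atom nat | Op 'c "'c fm list"

fun wf :: "('c \<Rightarrow> nat) \<Rightarrow> 'c fm \<Rightarrow> bool" where
  "wf ar (Atom p) = True"
| "wf ar (Op c Fs) = (length Fs = ar c \<and> list_all (wf ar) Fs)"

fun eval :: "('c \<Rightarrow> 'v list \<Rightarrow> 'v) \<Rightarrow> (nat \<Rightarrow> 'v) \<Rightarrow> 'c fm \<Rightarrow> 'v" where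
  "eval I v (Atom p) = v p"
| "eval I v (Op c Fs) = I c (map (eval I v) Fs)"

definition realizes_finite :: "(nat \<Rightarrow> 'v) set \<Rightarrow> bool" where
  "realizes_finite Vals \<longleftrightarrow>
     (\<forall>S g. finite S \<longrightarrow> (\<exists>v\<in>Vals. \<forall>p\<in>S. v p = g p))"

definition mixed_models :: "'v set \<Rightarrow> 'v set \<Rightarrow> 'v set \<Rightarrow> 'v set \<Rightarrow> bool" where
  "mixed_models Dp Dc \<gamma> \<delta> \<longleftrightarrow> (\<gamma> \<subseteq> Dp \<longrightarrow> \<delta> \<inter> Dc \<noteq> {})"

definition conseq ::
  "'v set \<Rightarrow> 'v set \<Rightarrow> ('c \<Rightarrow> 'v list \<Rightarrow> 'v) \<Rightarrow> (nat \<Rightarrow> 'v) set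
   \<Rightarrow> 'c fm set \<Rightarrow> 'c fm set \<Rightarrow> bool" where
  "conseq Dp Dc I Vals \<Gamma> \<Delta> \<longleftrightarrow>
     (\<forall>v\<in>Vals. mixed_models Dp Dc (eval I v ` \<Gamma>) (eval I v ` \<Delta>))"

definition constant_expressive ::
  "('c \<Rightarrow> nat) \<Rightarrow> ('c \<Rightarrow> 'v list \<Rightarrow> 'v) \<Rightarrow> (nat \<Rightarrow> 'v) set \<Rightarrow> bool" where
  "constant_expressive ar I Vals \<longleftrightarrow>
     (\<forall>x. \<exists>A. wf ar A \<and> (\<forall>v\<in>Vals. eval I v A = x))"

text \<open>Extension of a language by one new connective (named None) of arity n with truth function f.\<close>
definition ext_ar :: "('c \<Rightarrow> nat) \<Rightarrow> nat \<Rightarrow> 'c option \<Rightarrow> nat" where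
  "ext_ar ar n = case_option n ar"

definition ext_I ::
  "('c \<Rightarrow> 'v list \<Rightarrow> 'v) \<Rightarrow> ('v list \<Rightarrow> 'v) \<Rightarrow> 'c option \<Rightarrow> 'v list \<Rightarrow> 'v" where
  "ext_I I f = case_option f I"

definition G_conditional ::
  "'v set \<Rightarrow> 'v set \<Rightarrow> ('c \<Rightarrow> nat) \<Rightarrow> ('c \<Rightarrow> 'v list \<Rightarrow> 'v) \<Rightarrow> (nat \<Rightarrow> 'v) set \<Rightarrow> 'c \<Rightarrow> bool" where
  "G_conditional Dp Dc ar I Vals c \<longleftrightarrow> ar c = 2 \<and>
     (\<forall>\<Gamma> \<Delta> A B. (\<forall>F\<in>\<Gamma>. wf ar F) \<longrightarrow> (\<forall>F\<in>\<Delta>. wf ar F) \<longrightarrow> wf ar A \<longrightarrow> wf ar B \<longrightarrow>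
        (conseq Dp Dc I Vals \<Gamma> (insert (Op c [A, B]) \<Delta>)
           \<longleftrightarrow> conseq Dp Dc I Vals (insert A \<Gamma>) (insert B \<Delta>)) \<and>
        (conseq Dp Dc I Vals (insert (Op c [A, B]) \<Gamma>) \<Delta>
           \<longleftrightarrow> conseq Dp Dc I Vals \<Gamma> (insert A \<Delta>) \<and> conseq Dp Dc I Vals (insert B \<Gamma>) \<Delta>))"

text \<open>Regularity of an n-ary connective c with rule (Bp, Bc); argument positions are
  indexed 0..n-1 (the paper uses 1..n).\<close>
definition regular_with ::
  "'v set \<Rightarrow> 'v set \<Rightarrow> ('c \<Rightarrow> nat) \<Rightarrow> ('c \<Rightarrow> 'v list \<Rightarrow> 'v) \<Rightarrow> (nat \<Rightarrow> 'v) set \<Rightarrow> 'c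
   \<Rightarrow> (nat set \<times> nat set) set \<Rightarrow> (nat set \<times> nat set) set \<Rightarrow> bool" where
  "regular_with Dp Dc ar I Vals c Bp Bc \<longleftrightarrow>
     (\<forall>B\<in>Bp \<union> Bc. fst B \<subseteq> {..<ar c} \<and> snd B \<subseteq> {..<ar c}) \<and>
     (\<forall>\<Gamma> \<Delta> Fs. (\<forall>F\<in>\<Gamma>. wf ar F) \<longrightarrow> (\<forall>F\<in>\<Delta>. wf ar F) \<longrightarrow>
        length Fs = ar c \<longrightarrow> list_all (wf ar) Fs \<longrightarrow>
        (conseq Dp Dc I Vals (insert (Op c Fs) \<Gamma>) \<Delta> \<longleftrightarrow>
           (\<forall>(P, C)\<in>Bp. conseq Dp Dc I Vals (\<Gamma> \<union> {Fs ! i | i. i \<in> P})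
                                             ({Fs ! i | i. i \<in> C} \<union> \<Delta>))) \<and>
        (conseq Dp Dc I Vals \<Gamma> (insert (Op c Fs) \<Delta>) \<longleftrightarrow>
           (\<forall>(P, C)\<in>Bc. conseq Dp Dc I Vals (\<Gamma> \<union> {Fs ! i | i. i \<in> P})
                                             ({Fs ! i | i. i \<in> C} \<union> \<Delta>))))"

text \<open>Classical logic for a single n-ary classical connective g: values bool,
  1 = True, 0 = False, D_p = D_c = {True}, all valuations; the language has the one
  connective (named ()) of arity n interpreted by g.\<close>
definition classical_regular_with ::
  "nat \<Rightarrow> (bool list \<Rightarrow> bool) \<Rightarrow> (nat set \<times> nat set) set \<Rightarrow> (nat set \<times> nat set) set \<Rightarrow> bool" where
  "classical_regular_with n g Bp Bc \<longleftrightarrow>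
     regular_with {True} {True} (\<lambda>_::unit. n) (\<lambda>_. g) UNIV () Bp Bc"

definition classical_connective :: "nat \<Rightarrow> (bool list \<Rightarrow> bool) \<Rightarrow> bool" where
  "classical_connective n g \<longleftrightarrow> (\<exists>Bp Bc. classical_regular_with n g Bp Bc)"

end

theory Submission imports Defs begin

lemma conseq_iff: "conseq Dp Dc I Vals \<Gamma> \<Delta> \<longleftrightarrow>
  (\<forall>v\<in>Vals. (\<forall>F\<in>\<Gamma>. eval I v F \<in> Dp) \<longrightarrow> (\<exists>F\<in>\<Delta>. eval I v F \<in> Dc))"
  unfolding conseq_def mixed_models_def by (simp add: image_subset_iff disjoint_iff)

lemma atoms_conseq: "conseq {True} {True} I UNIV (Atom ` S) (Atom ` T) \<longleftrightarrow> S \<inter> T \<noteq> {}"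
proof -
  have "(\<forall>v::nat\<Rightarrow>bool. (\<forall>i\<in>S. v i) \<longrightarrow> (\<exists>i\<in>T. v i)) \<longleftrightarrow> S \<inter> T \<noteq> {}"
  proof
    assume "\<forall>v::nat\<Rightarrow>bool. (\<forall>i\<in>S. v i) \<longrightarrow> (\<exists>i\<in>T. v i)"
    from this[rule_format, of "\<lambda>i. i \<in> S"] show "S \<inter> T \<noteq> {}" by auto
  qed auto
  then show ?thesis by (simp add: conseq_iff)
qed

lemma classical_char:
  assumes "classical_regular_with n g Bp Bc" "length b = n"
  shows "g b \<longleftrightarrow> (\<exists>(P,C)\<in>Bp. (\<forall>i\<in>P. b!i) \<and> (\<forall>i\<in>C. \<not> b!i))"
    and "\<not> g b \<longleftrightarrow> (\<exists>(P,C)\<in>Bc. (\<forall>i\<in>P. b!i) \<and> (\<forall>i\<in>C. \<not> b!i))"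
proof -
  note R = assms(1)[unfolded classical_regular_with_def regular_with_def]
  have sub: "\<And>P C. (P,C) \<in> Bp \<union> Bc \<Longrightarrow> P \<subseteq> {..<n} \<and> C \<subseteq> {..<n}"
  proof -
    fix P C assume "(P,C) \<in> Bp \<union> Bc"
    from bspec[OF conjunct1[OF R] this] show "P \<subseteq> {..<n} \<and> C \<subseteq> {..<n}" by simp
  qed
  define S where "S = {i. i < n \<and> b!i}"
  define T where "T = {i. i < n \<and> \<not> b!i}"
  define Fs :: "unit fm list" where "Fs = map Atom [0..<n]"
  have wfs: "\<forall>F\<in>Atom ` S. wf (\<lambda>_. n) F" "\<forall>F\<in>Atom ` T. wf (\<lambda>_. n) F"
     "length Fs = n" "list_all (wf (\<lambda>_::unit. n)) Fs"
    by (auto simp: Fs_def list_all_iff)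
  have eqR: "{Fs ! i |i. i \<in> P} = Atom ` P" if P: "P \<subseteq> {..<n}" for P
  proof (intro equalityI subsetI)
    fix x assume "x \<in> {Fs ! i |i. i \<in> P}"
    then obtain i where "x = Fs ! i" "i \<in> P" by blast
    then show "x \<in> Atom ` P" using P by (auto simp: Fs_def)
  next
    fix x :: "unit fm" assume "x \<in> Atom ` P"
    then obtain i where i: "x = Atom i" "i \<in> P" by blast
    then have "x = Fs ! i" using P by (auto simp: Fs_def)
    then show "x \<in> {Fs ! i |i. i \<in> P}" using i by blast
  qed
  have atm: "\<And>P C. P \<subseteq> {..<n} \<Longrightarrow> C \<subseteq> {..<n} \<Longrightarrow>
     conseq {True} {True} (\<lambda>_. g) UNIV (Atom ` S \<union> {Fs ! i |i. i \<in> P}) ({Fs ! i |i. i \<in> C} \<union> Atom ` T)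
     \<longleftrightarrow> \<not> ((\<forall>i\<in>P. b!i) \<and> (\<forall>i\<in>C. \<not> b!i))"
  proof -
    fix P C assume P: "P \<subseteq> {..<n}" and C: "C \<subseteq> {..<n}"
    have "Atom ` S \<union> {Fs ! i |i. i \<in> P} = Atom ` (S \<union> P)"
         "{Fs ! i |i. i \<in> C} \<union> Atom ` T = Atom ` (C \<union> T)" using eqR P C by auto
    moreover have "(S \<union> P) \<inter> (C \<union> T) \<noteq> {} \<longleftrightarrow> \<not> ((\<forall>i\<in>P. b!i) \<and> (\<forall>i\<in>C. \<not> b!i))"
      using P C by (auto simp: S_def T_def)
    ultimately show "?thesis P C" by (simp add: atoms_conseq)
  qed
  define v0 where "v0 = (\<lambda>i. i < n \<and> b!i)"
  have mv0: "map v0 [0..<n] = b" using assms(2) by (auto simp: v0_def intro: nth_equalityI)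
  have mapev: "\<And>v. map (eval (\<lambda>_. g) v) Fs = map v [0..<n]" by (simp add: Fs_def)
  have L1: "conseq {True} {True} (\<lambda>_. g) UNIV (insert (Op () Fs) (Atom ` S)) (Atom ` T) \<longleftrightarrow> \<not> g b"
  proof
    assume "conseq {True} {True} (\<lambda>_. g) UNIV (insert (Op () Fs) (Atom ` S)) (Atom ` T)"
    then have "g (map v0 [0..<n]) \<and> (\<forall>i\<in>S. v0 i) \<longrightarrow> (\<exists>i\<in>T. v0 i)"
      by (auto simp: conseq_iff mapev)
    then show "\<not> g b" using mv0 by (auto simp: S_def T_def v0_def)
  next
    assume ng: "\<not> g b"
    show "conseq {True} {True} (\<lambda>_. g) UNIV (insert (Op () Fs) (Atom ` S)) (Atom ` T)"
    proof (unfold conseq_iff, intro ballI impI)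
      fix v :: "nat \<Rightarrow> bool" assume h: "\<forall>F\<in>insert (Op () Fs) (Atom ` S). eval (\<lambda>_. g) v F \<in> {True}"
      show "\<exists>F\<in>Atom ` T. eval (\<lambda>_. g) v F \<in> {True}"
      proof (rule ccontr)
        assume "\<not> ?thesis"
        with h have "map v [0..<n] = b" using assms(2)
          by (auto simp: S_def T_def intro!: nth_equalityI)
        with h ng show False by (simp add: mapev)
      qed
    qed
  qed
  have L2: "conseq {True} {True} (\<lambda>_. g) UNIV (Atom ` S) (insert (Op () Fs) (Atom ` T)) \<longleftrightarrow> g b"
  proof
    assume "conseq {True} {True} (\<lambda>_. g) UNIV (Atom ` S) (insert (Op () Fs) (Atom ` T))"
    then have "(\<forall>i\<in>S. v0 i) \<longrightarrow> g (map v0 [0..<n]) \<or> (\<exists>i\<in>T. v0 i)"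
      by (auto simp: conseq_iff mapev)
    then show "g b" using mv0 by (auto simp: S_def T_def v0_def)
  next
    assume ng: "g b"
    show "conseq {True} {True} (\<lambda>_. g) UNIV (Atom ` S) (insert (Op () Fs) (Atom ` T))"
    proof (unfold conseq_iff, intro ballI impI)
      fix v :: "nat \<Rightarrow> bool" assume h: "\<forall>F\<in>Atom ` S. eval (\<lambda>_. g) v F \<in> {True}"
      show "\<exists>F\<in>insert (Op () Fs) (Atom ` T). eval (\<lambda>_. g) v F \<in> {True}"
      proof (rule ccontr)
        assume c: "\<not> ?thesis"
        with h have "map v [0..<n] = b" using assms(2)
          by (auto simp: S_def T_def intro!: nth_equalityI)
        with c ng show False by (simp add: mapev)
      qed
    qed
  qed
  have RLR: "(conseq {True} {True} (\<lambda>_. g) UNIV (insert (Op () Fs) (Atom ` S)) (Atom ` T) \<longleftrightarrow>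
     (\<forall>(P, C)\<in>Bp. conseq {True} {True} (\<lambda>_. g) UNIV (Atom ` S \<union> {Fs ! i | i. i \<in> P}) ({Fs ! i | i. i \<in> C} \<union> Atom ` T))) \<and>
   (conseq {True} {True} (\<lambda>_. g) UNIV (Atom ` S) (insert (Op () Fs) (Atom ` T)) \<longleftrightarrow>
     (\<forall>(P, C)\<in>Bc. conseq {True} {True} (\<lambda>_. g) UNIV (Atom ` S \<union> {Fs ! i | i. i \<in> P}) ({Fs ! i | i. i \<in> C} \<union> Atom ` T)))"
  proof -
    have X: "(\<forall>F\<in>Atom ` S. wf (\<lambda>_. n) F) \<longrightarrow> (\<forall>F\<in>Atom ` T. wf (\<lambda>_. n) F) \<longrightarrow>
        length Fs = n \<longrightarrow> list_all (wf (\<lambda>_. n)) Fs \<longrightarrow> ?thesis"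
      using conjunct2[OF R, THEN spec[where x="Atom ` S"], THEN spec[where x="Atom ` T"], THEN spec[where x=Fs]]
      by simp
    show ?thesis using mp[OF mp[OF mp[OF mp[OF X wfs(1)] wfs(2)] wfs(3)] wfs(4)] .
  qed
  note RL = conjunct1[OF RLR] and RR = conjunct2[OF RLR]
  have "(\<forall>(P, C)\<in>Bp. conseq {True} {True} (\<lambda>_. g) UNIV (Atom ` S \<union> {Fs ! i | i. i \<in> P}) ({Fs ! i | i. i \<in> C} \<union> Atom ` T))
      \<longleftrightarrow> (\<forall>(P, C)\<in>Bp. \<not> ((\<forall>i\<in>P. b!i) \<and> (\<forall>i\<in>C. \<not> b!i)))"
  proof (rule ball_cong[OF refl])
    fix x assume "x \<in> Bp"
    then obtain P C where x: "x = (P,C)" "(P,C) \<in> Bp" by (cases x) auto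
    show "(case x of (P, C) \<Rightarrow> conseq {True} {True} (\<lambda>_. g) UNIV (Atom ` S \<union> {Fs ! i | i. i \<in> P}) ({Fs ! i | i. i \<in> C} \<union> Atom ` T))
      \<longleftrightarrow> (case x of (P, C) \<Rightarrow> \<not> ((\<forall>i\<in>P. b!i) \<and> (\<forall>i\<in>C. \<not> b!i)))"
      using atm[of P C] sub[of P C] x by simp
  qed
  then show "g b \<longleftrightarrow> (\<exists>(P,C)\<in>Bp. (\<forall>i\<in>P. b!i) \<and> (\<forall>i\<in>C. \<not> b!i))"
    using L1 RL by blast
  have "(\<forall>(P, C)\<in>Bc. conseq {True} {True} (\<lambda>_. g) UNIV (Atom ` S \<union> {Fs ! i | i. i \<in> P}) ({Fs ! i | i. i \<in> C} \<union> Atom ` T))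
      \<longleftrightarrow> (\<forall>(P, C)\<in>Bc. \<not> ((\<forall>i\<in>P. b!i) \<and> (\<forall>i\<in>C. \<not> b!i)))"
  proof (rule ball_cong[OF refl])
    fix x assume "x \<in> Bc"
    then obtain P C where x: "x = (P,C)" "(P,C) \<in> Bc" by (cases x) auto
    show "(case x of (P, C) \<Rightarrow> conseq {True} {True} (\<lambda>_. g) UNIV (Atom ` S \<union> {Fs ! i | i. i \<in> P}) ({Fs ! i | i. i \<in> C} \<union> Atom ` T))
      \<longleftrightarrow> (case x of (P, C) \<Rightarrow> \<not> ((\<forall>i\<in>P. b!i) \<and> (\<forall>i\<in>C. \<not> b!i)))"
      using atm[of P C] sub[of P C] x by simp
  qed
  then show "\<not> g b \<longleftrightarrow> (\<exists>(P,C)\<in>Bc. (\<forall>i\<in>P. b!i) \<and> (\<forall>i\<in>C. \<not> b!i))"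
    using L2 RR by blast
qed


lemma G_exists:
  fixes one zero :: "'v"
  assumes "one \<in> Dp" "zero \<notin> Dp" "one \<in> Dc" "zero \<notin> Dc"
  shows "\<exists>f. G_conditional Dp Dc (ext_ar ar 2) (ext_I I f) Vals None"
proof -
  define h where "h = (\<lambda>a b. if (a \<notin> Dc \<or> b \<in> Dp) then
      (if (a \<notin> Dp \<or> b \<in> Dc) then one else (SOME x. x \<in> Dp \<and> x \<notin> Dc))
    else (if (a \<notin> Dp \<or> b \<in> Dc) then (SOME x. x \<in> Dc \<and> x \<notin> Dp) else zero))"
  have key: "(h a b \<in> Dp \<longleftrightarrow> (a \<notin> Dc \<or> b \<in> Dp)) \<and> (h a b \<in> Dc \<longleftrightarrow> (a \<notin> Dp \<or> b \<in> Dc))" for a b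
  proof (cases "a \<notin> Dc \<or> b \<in> Dp")
    case True
    show ?thesis
    proof (cases "a \<notin> Dp \<or> b \<in> Dc")
      case True2: True
      then show ?thesis using True assms by (simp add: h_def)
    next
      case False
      then have "\<exists>x. x \<in> Dp \<and> x \<notin> Dc" using True by blast
      then have "(SOME x. x \<in> Dp \<and> x \<notin> Dc) \<in> Dp \<and> (SOME x. x \<in> Dp \<and> x \<notin> Dc) \<notin> Dc"
        by (rule someI_ex)
      then show ?thesis using True False by (simp add: h_def)
    qed
  next
    case False
    show ?thesis
    proof (cases "a \<notin> Dp \<or> b \<in> Dc")
      case True
      then have "\<exists>x. x \<in> Dc \<and> x \<notin> Dp" using False by blast
      then have "(SOME x. x \<in> Dc \<and> x \<notin> Dp) \<in> Dc \<and> (SOME x. x \<in> Dc \<and> x \<notin> Dp) \<notin> Dp"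
        by (rule someI_ex)
      then show ?thesis using True False by (simp add: h_def)
    next
      case False2: False
      then show ?thesis using False assms by (simp add: h_def)
    qed
  qed
  define f where "f = (\<lambda>xs. h (hd xs) (hd (tl xs)))"
  have ev: "ext_I I f None [a, b] = h a b" for a b
    by (simp add: ext_I_def f_def)
  have R: "conseq Dp Dc (ext_I I f) Vals \<Gamma> (insert (Op None [A, B]) \<Delta>)
           \<longleftrightarrow> conseq Dp Dc (ext_I I f) Vals (insert A \<Gamma>) (insert B \<Delta>)" for \<Gamma> \<Delta> A B
  proof -
    have "\<And>v. eval (ext_I I f) v (Op None [A, B]) \<in> Dc \<longleftrightarrow>
       (eval (ext_I I f) v A \<notin> Dp \<or> eval (ext_I I f) v B \<in> Dc)"
      by (simp only: eval.simps list.map ev key)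
    then show ?thesis unfolding conseq_iff by (intro ball_cong refl) auto
  qed
  have L: "conseq Dp Dc (ext_I I f) Vals (insert (Op None [A, B]) \<Gamma>) \<Delta>
           \<longleftrightarrow> conseq Dp Dc (ext_I I f) Vals \<Gamma> (insert A \<Delta>) \<and> conseq Dp Dc (ext_I I f) Vals (insert B \<Gamma>) \<Delta>" for \<Gamma> \<Delta> A B
  proof -
    have "\<And>v. eval (ext_I I f) v (Op None [A, B]) \<in> Dp \<longleftrightarrow>
       (eval (ext_I I f) v A \<notin> Dc \<or> eval (ext_I I f) v B \<in> Dp)"
      by (simp only: eval.simps list.map ev key)
    then show ?thesis unfolding conseq_iff by (unfold ball_conj_distrib[symmetric]) (intro ball_cong refl, auto)
  qed
  have "G_conditional Dp Dc (ext_ar ar 2) (ext_I I f) Vals None"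
    unfolding G_conditional_def using R L by (simp add: ext_ar_def)
  then show ?thesis by blast
qed

lemma bex_pair_mono:
  "(\<exists>(P,C)\<in>B. Q1 P C) \<Longrightarrow> (\<And>P C. (P,C)\<in>B \<Longrightarrow> Q1 P C \<Longrightarrow> Q2 P C) \<Longrightarrow> (\<exists>(P,C)\<in>B. Q2 P C)"
  by fast

lemma bex_pair_cong:
  "(\<And>P C. (P,C)\<in>B \<Longrightarrow> Q1 P C = Q2 P C) \<Longrightarrow> (\<exists>(P,C)\<in>B. Q1 P C) = (\<exists>(P,C)\<in>B. Q2 P C)"
  by fast

lemma rhs_gen:
  "(\<forall>(P,C)\<in>B. \<forall>v\<in>Vals. G v \<and> (\<forall>i\<in>P. a v i \<in> Dp) \<longrightarrow> (\<exists>i\<in>C. a v i \<in> Dc) \<or> X v) \<longleftrightarrow>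
   (\<forall>v\<in>Vals. G v \<and> (\<exists>(P,C)\<in>B. (\<forall>i\<in>P. a v i \<in> Dp) \<and> (\<forall>i\<in>C. a v i \<notin> Dc)) \<longrightarrow> X v)"
  by blast

lemma sp_gen: "(\<forall>F\<in>\<Gamma> \<union> {Fs ! i |i. i \<in> P}. e F \<in> D) \<longleftrightarrow> (\<forall>F\<in>\<Gamma>. e F \<in> D) \<and> (\<forall>i\<in>P. e (Fs!i) \<in> D)"
  by blast

lemma sc_gen: "(\<exists>F\<in>{Fs ! i |i. i \<in> C} \<union> \<Delta>. e F \<in> D) \<longleftrightarrow> (\<exists>i\<in>C. e (Fs!i) \<in> D) \<or> (\<exists>F\<in>\<Delta>. e F \<in> D)"
  by blast

theorem theorem6p1:
  fixes one zero :: "'v::finite"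
    and Dp Dc :: "'v set"
    and ar :: "'c \<Rightarrow> nat"
    and I :: "'c \<Rightarrow> 'v list \<Rightarrow> 'v"
    and Vals :: "(nat \<Rightarrow> 'v) set"
  assumes "one \<noteq> zero"
    and "one \<in> Dp" and "zero \<notin> Dp"
    and "one \<in> Dc" and "zero \<notin> Dc"
    and "realizes_finite Vals"
    and "constant_expressive ar I Vals"
  shows "(\<exists>f. G_conditional Dp Dc (ext_ar ar 2) (ext_I I f) Vals None)
       \<and> (\<forall>n g. classical_connective n g \<longrightarrow>
            (\<exists>f Bp Bc. classical_regular_with n g Bp Bc \<and>
                regular_with Dp Dc (ext_ar ar n) (ext_I I f) Vals None Bp Bc))"
proof
  show "\<exists>f. G_conditional Dp Dc (ext_ar ar 2) (ext_I I f) Vals None"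
    by (rule G_exists[OF assms(2-5)])
next
  show "\<forall>n g. classical_connective n g \<longrightarrow>
            (\<exists>f Bp Bc. classical_regular_with n g Bp Bc \<and>
                regular_with Dp Dc (ext_ar ar n) (ext_I I f) Vals None Bp Bc)"
  proof (intro allI impI)
    fix n g assume "classical_connective n g"
    then obtain Bp Bc where cr: "classical_regular_with n g Bp Bc"
      unfolding classical_connective_def by blast
    have sub: "P \<subseteq> {..<n} \<and> C \<subseteq> {..<n}" if "(P,C) \<in> Bp \<union> Bc" for P C
      using bspec[OF conjunct1[OF cr[unfolded classical_regular_with_def regular_with_def]] that] by simp
    define Ep where "Ep = (\<lambda>a::'v list. \<exists>(P,C)\<in>Bp. (\<forall>i\<in>P. a!i \<in> Dp) \<and> (\<forall>i\<in>C. a!i \<notin> Dc))"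
    define Ec where "Ec = (\<lambda>a::'v list. \<exists>(P,C)\<in>Bc. (\<forall>i\<in>P. a!i \<in> Dp) \<and> (\<forall>i\<in>C. a!i \<notin> Dc))"
    define f where "f = (\<lambda>a. if Ep a then (if Ec a then (SOME x. x \<in> Dp \<and> x \<notin> Dc) else one)
                          else (if Ec a then zero else (SOME x. x \<in> Dc \<and> x \<notin> Dp)))"
    have key: "(f a \<in> Dp \<longleftrightarrow> Ep a) \<and> (f a \<in> Dc \<longleftrightarrow> \<not> Ec a)" if len: "length a = n" for a
    proof (cases "Ep a")
      case True
      show ?thesis
      proof (cases "Ec a")
        case True2: True
        have "\<exists>x. x \<in> Dp \<and> x \<notin> Dc"
        proof (rule ccontr)
          assume "\<not> ?thesis"
          then have DpDc: "\<And>x. x \<in> Dp \<Longrightarrow> x \<in> Dc" by blast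
          define b where "b = map (\<lambda>x. x \<in> Dp) a"
          have lb: "length b = n" using len by (simp add: b_def)
          have "g b"
            unfolding classical_char(1)[OF cr lb]
          proof (rule bex_pair_mono[OF True[unfolded Ep_def]])
            fix P C assume PC: "(P,C) \<in> Bp" and h: "(\<forall>i\<in>P. a!i \<in> Dp) \<and> (\<forall>i\<in>C. a!i \<notin> Dc)"
            from sub[of P C] PC have "P \<subseteq> {..<n}" "C \<subseteq> {..<n}" by auto
            then show "(\<forall>i\<in>P. b!i) \<and> (\<forall>i\<in>C. \<not> b!i)" using h DpDc len by (auto simp: b_def subset_iff)
          qed
          moreover have "\<not> g b"
            unfolding classical_char(2)[OF cr lb]
          proof (rule bex_pair_mono[OF True2[unfolded Ec_def]])
            fix P C assume PC: "(P,C) \<in> Bc" and h: "(\<forall>i\<in>P. a!i \<in> Dp) \<and> (\<forall>i\<in>C. a!i \<notin> Dc)"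
            from sub[of P C] PC have "P \<subseteq> {..<n}" "C \<subseteq> {..<n}" by auto
            then show "(\<forall>i\<in>P. b!i) \<and> (\<forall>i\<in>C. \<not> b!i)" using h DpDc len by (auto simp: b_def subset_iff)
          qed
          ultimately show False by blast
        qed
        then have "(SOME x. x \<in> Dp \<and> x \<notin> Dc) \<in> Dp \<and> (SOME x. x \<in> Dp \<and> x \<notin> Dc) \<notin> Dc"
          by (rule someI_ex)
        then show ?thesis using True True2 by (simp add: f_def)
      next
        case False
        then show ?thesis using True assms by (simp add: f_def)
      qed
    next
      case False
      show ?thesis
      proof (cases "Ec a")
        case True
        then show ?thesis using False assms by (simp add: f_def)
      next
        case False2: False
        have "\<exists>x. x \<in> Dc \<and> x \<notin> Dp"
        proof (rule ccontr)
          assume "\<not> ?thesis"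
          then have DcDp: "\<And>x. x \<in> Dc \<Longrightarrow> x \<in> Dp" by blast
          define b where "b = map (\<lambda>x. x \<in> Dc) a"
          have lb: "length b = n" using len by (simp add: b_def)
          show False
          proof (cases "g b")
            case True
            have "Ep a" unfolding Ep_def
            proof (rule bex_pair_mono[OF True[unfolded classical_char(1)[OF cr lb]]])
              fix P C assume PC: "(P,C) \<in> Bp" and h: "(\<forall>i\<in>P. b!i) \<and> (\<forall>i\<in>C. \<not> b!i)"
              from sub[of P C] PC have "P \<subseteq> {..<n}" "C \<subseteq> {..<n}" by auto
              then show "(\<forall>i\<in>P. a!i \<in> Dp) \<and> (\<forall>i\<in>C. a!i \<notin> Dc)" using h DcDp len by (auto simp: b_def subset_iff)
            qed
            then show False using False by blast
          next
            case gF: False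
            have "Ec a" unfolding Ec_def
            proof (rule bex_pair_mono[OF gF[unfolded classical_char(2)[OF cr lb]]])
              fix P C assume PC: "(P,C) \<in> Bc" and h: "(\<forall>i\<in>P. b!i) \<and> (\<forall>i\<in>C. \<not> b!i)"
              from sub[of P C] PC have "P \<subseteq> {..<n}" "C \<subseteq> {..<n}" by auto
              then show "(\<forall>i\<in>P. a!i \<in> Dp) \<and> (\<forall>i\<in>C. a!i \<notin> Dc)" using h DcDp len by (auto simp: b_def subset_iff)
            qed
            then show False using False2 by blast
          qed
        qed
        then have "(SOME x. x \<in> Dc \<and> x \<notin> Dp) \<in> Dc \<and> (SOME x. x \<in> Dc \<and> x \<notin> Dp) \<notin> Dp"
          by (rule someI_ex)
        then show ?thesis using False False2 by (simp add: f_def)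
      qed
    qed
    have "regular_with Dp Dc (ext_ar ar n) (ext_I I f) Vals None Bp Bc"
      unfolding regular_with_def
    proof (intro conjI allI impI)
      show "\<forall>B\<in>Bp \<union> Bc. fst B \<subseteq> {..<ext_ar ar n None} \<and> snd B \<subseteq> {..<ext_ar ar n None}"
      proof
        fix B assume B: "B \<in> Bp \<union> Bc"
        obtain P C where PC: "B = (P, C)" by (cases B)
        show "fst B \<subseteq> {..<ext_ar ar n None} \<and> snd B \<subseteq> {..<ext_ar ar n None}"
          using sub[of P C] B PC by (simp add: ext_ar_def)
      qed
    next
      fix \<Gamma> \<Delta> :: "'c option fm set" and Fs :: "'c option fm list"
      assume len0: "length Fs = ext_ar ar n None"
      then have len: "length Fs = n" by (simp add: ext_ar_def)
      let ?e = "\<lambda>v. map (eval (ext_I I f) v) Fs"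
      have evOp: "eval (ext_I I f) v (Op None Fs) = f (?e v)" for v by (simp add: ext_I_def)
      have nth: "\<And>v i. i < n \<Longrightarrow> ?e v ! i = eval (ext_I I f) v (Fs ! i)" using len by simp
      have Epv: "Ep (?e v) \<longleftrightarrow> (\<exists>(P,C)\<in>Bp. (\<forall>i\<in>P. eval (ext_I I f) v (Fs ! i) \<in> Dp) \<and> (\<forall>i\<in>C. eval (ext_I I f) v (Fs ! i) \<notin> Dc))" for v
        unfolding Ep_def
      proof (rule bex_pair_cong)
        fix P C assume PC: "(P,C) \<in> Bp"
        from sub[of P C] PC have "P \<subseteq> {..<n}" "C \<subseteq> {..<n}" by auto
        then show "((\<forall>i\<in>P. ?e v ! i \<in> Dp) \<and> (\<forall>i\<in>C. ?e v ! i \<notin> Dc)) =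
          ((\<forall>i\<in>P. eval (ext_I I f) v (Fs ! i) \<in> Dp) \<and> (\<forall>i\<in>C. eval (ext_I I f) v (Fs ! i) \<notin> Dc))"
          using nth by (auto simp: subset_iff)
      qed
      have Ecv: "Ec (?e v) \<longleftrightarrow> (\<exists>(P,C)\<in>Bc. (\<forall>i\<in>P. eval (ext_I I f) v (Fs ! i) \<in> Dp) \<and> (\<forall>i\<in>C. eval (ext_I I f) v (Fs ! i) \<notin> Dc))" for v
        unfolding Ec_def
      proof (rule bex_pair_cong)
        fix P C assume PC: "(P,C) \<in> Bc"
        from sub[of P C] PC have "P \<subseteq> {..<n}" "C \<subseteq> {..<n}" by auto
        then show "((\<forall>i\<in>P. ?e v ! i \<in> Dp) \<and> (\<forall>i\<in>C. ?e v ! i \<notin> Dc)) =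
          ((\<forall>i\<in>P. eval (ext_I I f) v (Fs ! i) \<in> Dp) \<and> (\<forall>i\<in>C. eval (ext_I I f) v (Fs ! i) \<notin> Dc))"
          using nth by (auto simp: subset_iff)
      qed
      have kv: "(f (?e v) \<in> Dp \<longleftrightarrow> Ep (?e v)) \<and> (f (?e v) \<in> Dc \<longleftrightarrow> \<not> Ec (?e v))" for v
        using key len by simp
      let ?G = "\<lambda>v. \<forall>F\<in>\<Gamma>. eval (ext_I I f) v F \<in> Dp"
      let ?X = "\<lambda>v. \<exists>F\<in>\<Delta>. eval (ext_I I f) v F \<in> Dc"
      let ?a = "\<lambda>v i. eval (ext_I I f) v (Fs ! i)"
      have rhs: "(\<forall>(P, C)\<in>B. conseq Dp Dc (ext_I I f) Vals (\<Gamma> \<union> {Fs ! i |i. i \<in> P}) ({Fs ! i |i. i \<in> C} \<union> \<Delta>))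
         \<longleftrightarrow> (\<forall>v\<in>Vals. ?G v \<and> (\<exists>(P,C)\<in>B. (\<forall>i\<in>P. ?a v i \<in> Dp) \<and> (\<forall>i\<in>C. ?a v i \<notin> Dc)) \<longrightarrow> ?X v)" for B
        unfolding conseq_iff sp_gen sc_gen by (rule rhs_gen)
      have fp: "f (?e v) \<in> Dp \<longleftrightarrow> (\<exists>(P,C)\<in>Bp. (\<forall>i\<in>P. ?a v i \<in> Dp) \<and> (\<forall>i\<in>C. ?a v i \<notin> Dc))" for v
        using kv Epv by blast
      have fc: "f (?e v) \<notin> Dc \<longleftrightarrow> (\<exists>(P,C)\<in>Bc. (\<forall>i\<in>P. ?a v i \<in> Dp) \<and> (\<forall>i\<in>C. ?a v i \<notin> Dc))" for v
        using kv Ecv by blast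
      show "conseq Dp Dc (ext_I I f) Vals (insert (Op None Fs) \<Gamma>) \<Delta> =
        (\<forall>(P, C)\<in>Bp. conseq Dp Dc (ext_I I f) Vals (\<Gamma> \<union> {Fs ! i |i. i \<in> P}) ({Fs ! i |i. i \<in> C} \<union> \<Delta>))"
        unfolding rhs unfolding conseq_iff by (intro ball_cong refl) (simp only: ball_simps evOp fp, blast)
      show "conseq Dp Dc (ext_I I f) Vals \<Gamma> (insert (Op None Fs) \<Delta>) =
        (\<forall>(P, C)\<in>Bc. conseq Dp Dc (ext_I I f) Vals (\<Gamma> \<union> {Fs ! i |i. i \<in> P}) ({Fs ! i |i. i \<in> C} \<union> \<Delta>))"
        unfolding rhs unfolding conseq_iff by (intro ball_cong refl) (simp only: bex_simps evOp, use fc in blast)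
    qed
    then show "\<exists>f Bp Bc. classical_regular_with n g Bp Bc \<and>
                regular_with Dp Dc (ext_ar ar n) (ext_I I f) Vals None Bp Bc"
      using cr by blast
  qed
qed

end
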